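(* Let $E$ be a real affine space of finite dimension, let $\mathcal P$ be a Yao-Yao partition of $E$ and let $x$ be its center. Then every affine half-space of $E$ of the form $\{y\in E: \ell(y)\ge 0\}$, with $\ell$ an affine form on $E$ satisfying $\ell(x)\ge 0$, contains an element of $\mathcal P$.
   Context: $\vec E$ denotes the vector space associated with $E$. A partition of $E$ is a collection $\mathcal P$ of subsets of $E$ with $\bigcup\mathcal P=E$ such that the interiors of any two distinct elements of $\mathcal P$ are disjoint. Yao-Yao partitions and their centers are defined by induction on the dimension: if $E=\{x\}$ has dimension $0$, the Yao-Yao partition of $E$ is $\{\{x\}\}$, with center $x$. If $\dim E=n\ge 1$, $\mathcal P$ is a Yao-Yao partition of $E$ with center $x$ if there exist an affine hyperplane $F$ of $E$, a vector $v\in\vec E\setminus\vec F$ and two Yao-Yao partitions $\mathcal P_1,\mathcal P_{-1}$ of $F$ having the same center $x$, such that $\mathcal P=\{A+\mathbb R_- v : A\in\mathcal P_{-1}\}\cup\{A+\mathbb R_+ v: A\in\mathcal P_1\}$. *)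

theory Defs
  imports "HOL-Analysis.Analysis"
begin

text \<open>A finite-dimensional real affine space E is modelled as an affine subset of
a Euclidean space 'a. Its direction (associated vector space) is the set of differences.\<close>

definition vec_dir :: "'a::real_vector set \<Rightarrow> 'a set" where
  "vec_dir S = {a - b | a b. a \<in> S \<and> b \<in> S}"

definition ray_minus :: "'a::real_vector set \<Rightarrow> 'a \<Rightarrow> 'a set" where
  "ray_minus A v = {a + t *\<^sub>R v | a t. a \<in> A \<and> t \<le> 0}"

definition ray_plus :: "'a::real_vector set \<Rightarrow> 'a \<Rightarrow> 'a set" where
  "ray_plus A v = {a + t *\<^sub>R v | a t. a \<in> A \<and> t \<ge> 0}"

inductive yao_yao :: "'a::euclidean_space set \<Rightarrow> 'a set set \<Rightarrow> 'a \<Rightarrow> bool" where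
  base: "yao_yao {x} {{x}} x"
| step: "\<lbrakk> affine E; aff_dim E \<ge> 1;
           affine F; F \<subseteq> E; aff_dim F = aff_dim E - 1;
           v \<in> vec_dir E; v \<notin> vec_dir F;
           yao_yao F P1 x; yao_yao F Pm1 x;
           P = (\<lambda>A. ray_minus A v) ` Pm1 \<union> (\<lambda>A. ray_plus A v) ` P1 \<rbrakk>
         \<Longrightarrow> yao_yao E P x"

definition affine_form_on :: "'a::real_vector set \<Rightarrow> ('a \<Rightarrow> real) \<Rightarrow> bool" where
  "affine_form_on E l \<longleftrightarrow>
     (\<forall>y\<in>E. \<forall>z\<in>E. \<forall>u::real. l ((1 - u) *\<^sub>R y + u *\<^sub>R z) = (1 - u) * l y + u * l z)"

end

theory Submission
  imports Defs
begin

lemma aff_comb: "affine E \<Longrightarrow> a \<in> E \<Longrightarrow> b \<in> E \<Longrightarrow> (1 - u) *\<^sub>R a + u *\<^sub>R b \<in> E"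
  unfolding affine_def by auto

lemma aff_trans:
  assumes "affine E" "a \<in> E" "v \<in> vec_dir E"
  shows "a + v \<in> E"
proof -
  obtain b1 b2 where b: "b1 \<in> E" "b2 \<in> E" "v = b1 - b2"
    using assms(3) unfolding vec_dir_def by blast
  define m where "m = (1 - (1/2::real)) *\<^sub>R a + (1/2::real) *\<^sub>R b1"
  have m: "m \<in> E" unfolding m_def by (rule aff_comb[OF assms(1,2) b(1)])
  have "(1 - 2) *\<^sub>R b2 + (2::real) *\<^sub>R m \<in> E" using aff_comb[OF assms(1) b(2) m] .
  moreover have "(1 - 2) *\<^sub>R b2 + (2::real) *\<^sub>R m = a + v"
    unfolding m_def b(3) by (simp add: algebra_simps scaleR_2)
  ultimately show ?thesis by simp
qed

lemma form_const:
  assumes "affine E" "affine_form_on E l" "a \<in> E" "b \<in> E" "v \<in> vec_dir E"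
  shows "l (a + v) - l a = l (b + v) - l b"
proof -
  have av: "a + v \<in> E" and bv: "b + v \<in> E" using aff_trans assms by blast+
  have "(1 - (1/2::real)) *\<^sub>R (a + v) + (1/2::real) *\<^sub>R b
      = (1 - (1/2::real)) *\<^sub>R a + (1/2::real) *\<^sub>R (b + v)"
    by (simp add: algebra_simps)
  hence "(1 - 1/2) * l (a + v) + 1/2 * l b = (1 - 1/2) * l a + 1/2 * l (b + v)"
    using assms(2) av bv assms(3,4) unfolding affine_form_on_def by metis
  thus ?thesis by simp
qed

lemma form_line:
  assumes "affine E" "affine_form_on E l" "a \<in> E" "v \<in> vec_dir E"
  shows "a + t *\<^sub>R v \<in> E \<and> l (a + t *\<^sub>R v) = l a + t * (l (a + v) - l a)"
proof -
  have av: "a + v \<in> E" using aff_trans assms by blast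
  have eq: "a + t *\<^sub>R v = (1 - t) *\<^sub>R a + t *\<^sub>R (a + v)" by (simp add: algebra_simps)
  have "l ((1 - t) *\<^sub>R a + t *\<^sub>R (a + v)) = (1 - t) * l a + t * l (a + v)"
    using assms(2,3) av unfolding affine_form_on_def by blast
  thus ?thesis using aff_comb[OF assms(1,3) av, of t] unfolding eq by (simp add: algebra_simps)
qed

lemma center_in: "yao_yao E P x \<Longrightarrow> x \<in> E"
  by (induction rule: yao_yao.induct) auto

theorem proposition4:
  fixes E :: "'a::euclidean_space set" and P :: "'a set set" and x :: 'a
    and l :: "'a \<Rightarrow> real"
  assumes "yao_yao E P x"
    and "affine_form_on E l"
    and "l x \<ge> 0"
  shows "\<exists>A\<in>P. A \<subseteq> {y \<in> E. l y \<ge> 0}"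
  using assms
proof (induction arbitrary: l rule: yao_yao.induct)
  case (base x)
  then show ?case by auto
next
  case (step E F v P1 x Pm1 P)
  have lF: "affine_form_on F l" using step.prems(1) step.hyps(4)
    unfolding affine_form_on_def by blast
  have xF: "x \<in> F" using center_in step.hyps(8) .
  define d where "d = l (x + v) - l x"
  have dd: "\<And>a. a \<in> E \<Longrightarrow> l (a + v) - l a = d"
    unfolding d_def using form_const[OF step.hyps(1) step.prems(1)] xF step.hyps(4,6) by blast
  have line: "\<And>a t. a \<in> F \<Longrightarrow> a + t *\<^sub>R v \<in> E \<and> l (a + t *\<^sub>R v) = l a + t * d"
    using form_line[OF step.hyps(1) step.prems(1)] dd step.hyps(4,6) by blast
  show ?case
  proof (cases "d \<ge> 0")
    case True
    obtain A where A: "A \<in> P1" "A \<subseteq> {y \<in> F. l y \<ge> 0}" using step.IH(1)[OF lF step.prems(2)] by blast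
    have "ray_plus A v \<subseteq> {y \<in> E. l y \<ge> 0}"
    proof
      fix y assume "y \<in> ray_plus A v"
      then obtain a t where "a \<in> A" "t \<ge> 0" "y = a + t *\<^sub>R v" unfolding ray_plus_def by blast
      thus "y \<in> {y \<in> E. l y \<ge> 0}" using line[of a t] A True by auto
    qed
    thus ?thesis using A step.hyps(10) by blast
  next
    case False
    obtain A where A: "A \<in> Pm1" "A \<subseteq> {y \<in> F. l y \<ge> 0}" using step.IH(2)[OF lF step.prems(2)] by blast
    have "ray_minus A v \<subseteq> {y \<in> E. l y \<ge> 0}"
    proof
      fix y assume "y \<in> ray_minus A v"
      then obtain a t where "a \<in> A" "t \<le> 0" "y = a + t *\<^sub>R v" unfolding ray_minus_def by blast
      moreover have "t * d \<ge> 0" using \<open>t \<le> 0\<close> False by (simp add: mult_nonpos_nonpos)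
      ultimately show "y \<in> {y \<in> E. l y \<ge> 0}" using line[of a t] A by auto
    qed
    thus ?thesis using A step.hyps(10) by blast
  qed
qed

end
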